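(* Let $m\ge1$, let $\lambda_1\ge0$ and $\lambda_2\ge0$, and let $f_1,\dots,f_m$ be real numbers ordered so that $|f_1|\le|f_2|\le\cdots\le|f_m|$. Then there exist real numbers $\xi_{i0}\in[-\lambda_1,\lambda_1]$ for $i=1,\dots,m$ and real numbers $\xi_{ij}\in[-\lambda_2,\lambda_2]$ for $i\ne j\in\{1,\dots,m\}$, satisfying $|\xi_{ij}|+|\xi_{ji}|\le\lambda_2$ for all $i\neq j$, such that $$f_i+\xi_{i0}+\sum_{j\in\{1,\dots,m\}\setminus\{i\}}\xi_{ij}=0,\qquad i=1,\dots,m,$$ if and only if $$\sum_{j=k+1}^{m}|f_j|\le\lambda_1(m-k)+\lambda_2\frac{(m-k)(m+k-1)}{2}\quad\text{for }k=0,\dots,m-1.$$ *)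

theory Defs
  imports Complex_Main
begin

end

theory Submission
  imports Defs
begin

lemma threshold:
  fixes P :: "nat \<Rightarrow> bool"
  assumes "\<forall>i j. 1 \<le> i \<longrightarrow> i \<le> j \<longrightarrow> j \<le> m \<longrightarrow> P i \<longrightarrow> P j"
  shows "\<exists>u\<le>m. (\<forall>j. 1 \<le> j \<longrightarrow> j \<le> u \<longrightarrow> \<not> P j) \<and> (\<forall>j. u < j \<longrightarrow> j \<le> m \<longrightarrow> P j)"
  using assms
proof (induction m)
  case 0
  then show ?case by auto
next
  case (Suc m)
  have "\<forall>i j. 1 \<le> i \<longrightarrow> i \<le> j \<longrightarrow> j \<le> m \<longrightarrow> P i \<longrightarrow> P j" using Suc.prems by auto
  then obtain u where u: "u \<le> m" "\<forall>j. 1 \<le> j \<longrightarrow> j \<le> u \<longrightarrow> \<not> P j" "\<forall>j. u < j \<longrightarrow> j \<le> m \<longrightarrow> P j"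
    using Suc.IH by blast
  show ?case
  proof (cases "u < m")
    case True
    then have "P m" using u by auto
    moreover have "1 \<le> m" using True by auto
    ultimately have "P (Suc m)" using Suc.prems by auto
    then show ?thesis using u by (intro exI[of _ u]) (auto simp: le_Suc_eq)
  next
    case False
    then have um: "u = m" using u by auto
    show ?thesis
    proof (cases "P (Suc m)")
      case True
      then show ?thesis using u um by (intro exI[of _ u]) (auto simp: le_Suc_eq)
    next
      case False
      then show ?thesis using u um by (intro exI[of _ "Suc m"]) (auto simp: le_Suc_eq)
    qed
  qed
qed

lemma sum_split_nat:
  fixes g :: "nat \<Rightarrow> real"
  assumes "x \<le> y" "y \<le> m"
  shows "(\<Sum>j\<in>{x+1..m}. g j) = (\<Sum>j\<in>{x+1..y}. g j) + (\<Sum>j\<in>{y+1..m}. g j)"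
proof -
  have "{x+1..m} = {x+1..y} \<union> {y+1..m}" using assms by auto
  then show ?thesis by (simp add: sum.union_disjoint ivl_disj_int_two)
qed

lemma sum_const_ivl:
  fixes t :: real
  assumes "v \<le> u"
  shows "(\<Sum>j\<in>{v+1..u}. t) = (real u - real v) * t"
  using assms by (simp add: of_nat_diff)

lemma pair_sum:
  fixes g :: "nat \<Rightarrow> nat \<Rightarrow> real"
  assumes "finite T" "\<forall>i\<in>T. \<forall>j\<in>T. i \<noteq> j \<longrightarrow> g i j + g j i \<le> L"
  shows "(\<Sum>i\<in>T. \<Sum>j\<in>T-{i}. g i j) \<le> L * (real (card T) * (real (card T) - 1) / 2)"
  using assms
proof (induction T rule: finite_induct)
  case empty
  then show ?case by simp
next
  case (insert x T)
  have IH: "(\<Sum>i\<in>T. \<Sum>j\<in>T-{i}. g i j) \<le> L * (real (card T) * (real (card T) - 1) / 2)"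
    using insert by auto
  have e1: "(\<Sum>i\<in>insert x T. \<Sum>j\<in>insert x T-{i}. g i j)
     = (\<Sum>j\<in>T. g x j) + (\<Sum>i\<in>T. \<Sum>j\<in>insert x T-{i}. g i j)"
    using insert by (simp add: insert_Diff_if)
  have e2: "\<And>i. i \<in> T \<Longrightarrow> (\<Sum>j\<in>insert x T-{i}. g i j) = g i x + (\<Sum>j\<in>T-{i}. g i j)"
  proof -
    fix i assume "i \<in> T"
    then have "insert x T - {i} = insert x (T - {i})" "x \<notin> T - {i}" using insert by auto
    then show "(\<Sum>j\<in>insert x T-{i}. g i j) = g i x + (\<Sum>j\<in>T-{i}. g i j)"
      using insert by simp
  qed
  have "(\<Sum>i\<in>insert x T. \<Sum>j\<in>insert x T-{i}. g i j)
     = (\<Sum>j\<in>T. g x j + g j x) + (\<Sum>i\<in>T. \<Sum>j\<in>T-{i}. g i j)"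
    using e1 e2 by (simp add: sum.distrib)
  also have "(\<Sum>j\<in>T. g x j + g j x) \<le> (\<Sum>j\<in>T. L)"
    apply (rule sum_mono) using insert.prems insert.hyps by auto
  finally show ?case using IH insert.hyps by (simp add: algebra_simps)
qed

definition Nb :: "real \<Rightarrow> real \<Rightarrow> nat \<Rightarrow> nat \<Rightarrow> real" where
  "Nb c lam m k = (c+lam)*(real m - real k) + lam*((real m - real k)*(real m + real k - 1)/2)"

lemma interp:
  fixes S t c lam :: real
  assumes "v < k" "k \<le> u" "0 \<le> lam" "S \<le> Nb c lam m u"
    "S + (real u - real v) * t \<le> Nb c lam m v"
  shows "S + (real u - real k) * t \<le> Nb c lam m k"
proof -
  define V where "V = real v"
  define K where "K = real k"
  define U where "U = real u"
  have vk: "V < K" and ku: "K \<le> U" using assms(1,2) by (auto simp: V_def K_def U_def)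
  have h1: "(K - V) * (S - Nb c lam m u) \<le> 0"
    using assms(4) vk by (intro mult_nonneg_nonpos) auto
  have h2: "(U - K) * (S + (U - V) * t - Nb c lam m v) \<le> 0"
    using assms(5) ku by (intro mult_nonneg_nonpos) (auto simp: U_def V_def)
  have id: "(K - V) * Nb c lam m u + (U - K) * Nb c lam m v
      = (U - V) * Nb c lam m k - lam / 2 * ((U - V) * (U - K) * (K - V))"
    unfolding Nb_def U_def V_def K_def by (simp add: field_simps)
  have pos: "0 \<le> lam / 2 * ((U - V) * (U - K) * (K - V))"
    using vk ku assms(3) by (intro mult_nonneg_nonneg) auto
  have "(U - V) * (S + (U - K) * t - Nb c lam m k) \<le> 0"
    using h1 h2 id pos by (simp add: algebra_simps) 
  then have "S + (U - K) * t - Nb c lam m k \<le> 0"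
    using vk ku by (simp add: mult_le_0_iff)
  then show ?thesis by (simp add: U_def K_def)
qed

lemma wf_bound:
  fixes a q :: "nat \<Rightarrow> real" and t c lam w :: real
  assumes km: "k \<le> m" and l0: "0 \<le> lam"
  and srt: "\<forall>i j. 1 \<le> i \<longrightarrow> i \<le> j \<longrightarrow> j \<le> m \<longrightarrow> a i \<le> a j"
  and srt': "\<forall>i j. 1 \<le> i \<longrightarrow> i \<le> j \<longrightarrow> j \<le> m \<longrightarrow> a i + q i \<le> a j + q j"
  and qdef: "\<forall>j. q j = min lam (max 0 (t - a j))"
  and sumq: "(\<Sum>j\<in>{1..m}. q j) = w"
  and top: "\<forall>k\<le>m. (\<Sum>j\<in>{k+1..m}. a j) \<le> Nb c lam m k"
  and topw: "\<forall>k\<le>m. (\<Sum>j\<in>{k+1..m}. a j) + w \<le> Nb c lam m k + lam * real k"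
  shows "(\<Sum>j\<in>{k+1..m}. a j + q j) \<le> Nb c lam m k"
proof -
  have cI: "(\<Sum>j\<in>{v+1..m}. a j + q j) \<le> Nb c lam m v"
    if vm: "v \<le> m" and hq: "\<forall>j. 1 \<le> j \<longrightarrow> j \<le> v \<longrightarrow> q j = lam" for v
  proof -
    have "(\<Sum>j\<in>{0+1..m}. q j) = (\<Sum>j\<in>{0+1..v}. q j) + (\<Sum>j\<in>{v+1..m}. q j)"
      by (rule sum_split_nat) (use vm in auto)
    moreover have "(\<Sum>j\<in>{1..v}. q j) = (\<Sum>j\<in>{1..v}. lam)"
      by (rule sum.cong) (use hq in auto)
    ultimately have "(\<Sum>j\<in>{v+1..m}. q j) = w - real v * lam" using sumq by simp
    then have "(\<Sum>j\<in>{v+1..m}. a j + q j) = (\<Sum>j\<in>{v+1..m}. a j) + w - real v * lam"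
      by (simp add: sum.distrib)
    then show ?thesis using topw vm by (auto simp: algebra_simps)
  qed
  have qle: "q j \<le> lam" "0 \<le> q j" for j using qdef l0 by auto
  obtain u where u: "u \<le> m" "\<forall>j. 1 \<le> j \<longrightarrow> j \<le> u \<longrightarrow> \<not> t < a j" "\<forall>j. u < j \<longrightarrow> j \<le> m \<longrightarrow> t < a j"
    using threshold[of m "\<lambda>j. t < a j"] srt by force
  obtain v where v: "v \<le> m" "\<forall>j. 1 \<le> j \<longrightarrow> j \<le> v \<longrightarrow> \<not> t \<le> a j + q j" "\<forall>j. v < j \<longrightarrow> j \<le> m \<longrightarrow> t \<le> a j + q j"
    using threshold[of m "\<lambda>j. t \<le> a j + q j"] srt' by force
  have q0: "q j = 0" if "t < a j" for j using that qdef l0 by auto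
  show ?thesis
  proof (cases "u \<le> k")
    case True
    have "(\<Sum>j\<in>{k+1..m}. a j + q j) = (\<Sum>j\<in>{k+1..m}. a j)"
      by (rule sum.cong) (use True u q0 in auto)
    then show ?thesis using top km by simp
  next
    case False
    then have ku: "k < u" by simp
    show ?thesis
    proof (cases "\<forall>j. 1 \<le> j \<longrightarrow> j \<le> k \<longrightarrow> q j = lam")
      case True
      then show ?thesis using cI km by blast
    next
      case False
      then obtain j where j: "1 \<le> j" "j \<le> k" "q j \<noteq> lam" by blast
      then have "q j < lam" using qle[of j] by simp
      then have "t \<le> a j + q j" using qdef by (auto simp: min_def max_def split: if_splits)
      then have vj: "v < j" using v j by (meson not_le)
      have qlam: "\<forall>j. 1 \<le> j \<longrightarrow> j \<le> v \<longrightarrow> q j = lam"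
      proof (intro allI impI)
        fix i assume i: "1 \<le> i" "i \<le> v"
        show "q i = lam"
        proof (rule ccontr)
          assume "q i \<noteq> lam"
          then have "q i < lam" using qle[of i] by simp
          then have "t \<le> a i + q i" using qdef by (auto simp: min_def max_def split: if_splits)
          then show False using v i by auto
        qed
      qed
      have eqt: "a i + q i = t" if "v < i" "i \<le> u" for i
      proof -
        have "t \<le> a i + q i" using v that u by auto
        moreover have "1 \<le> i" using that by simp
        then have "a i \<le> t" using u that by (meson not_less)
        then have "q i \<le> t - a i" using qdef by (auto simp: min_def max_def)
        ultimately show ?thesis by simp
      qed
      define S where "S = (\<Sum>j\<in>{u+1..m}. a j)"
      have tail: "(\<Sum>j\<in>{u+1..m}. a j + q j) = S"
        unfolding S_def by (rule sum.cong) (use u q0 in auto)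
      have sv: "(\<Sum>j\<in>{v+1..m}. a j + q j) = S + (real u - real v) * t"
      proof -
        have "(\<Sum>j\<in>{v+1..m}. a j + q j) = (\<Sum>j\<in>{v+1..u}. a j + q j) + (\<Sum>j\<in>{u+1..m}. a j + q j)"
          by (rule sum_split_nat) (use vj j ku u in auto)
        moreover have "(\<Sum>j\<in>{v+1..u}. a j + q j) = (\<Sum>j\<in>{v+1..u}. t)"
          by (rule sum.cong) (use eqt in auto)
        ultimately show ?thesis using tail sum_const_ivl[of v u t] vj j ku by simp
      qed
      have sk: "(\<Sum>j\<in>{k+1..m}. a j + q j) = S + (real u - real k) * t"
      proof -
        have "(\<Sum>j\<in>{k+1..m}. a j + q j) = (\<Sum>j\<in>{k+1..u}. a j + q j) + (\<Sum>j\<in>{u+1..m}. a j + q j)"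
          by (rule sum_split_nat) (use ku u in auto)
        moreover have "(\<Sum>j\<in>{k+1..u}. a j + q j) = (\<Sum>j\<in>{k+1..u}. t)"
          by (rule sum.cong) (use eqt vj j in auto)
        ultimately show ?thesis using tail sum_const_ivl[of k u t] ku by simp
      qed
      have "S \<le> Nb c lam m u" using top u unfolding S_def by auto
      moreover have "S + (real u - real v) * t \<le> Nb c lam m v" using cI[OF v(1) qlam] sv by simp
      ultimately have "S + (real u - real k) * t \<le> Nb c lam m k"
        using interp[of v k u lam S c m t] vj j ku l0 by linarith
      then show ?thesis using sk by simp
    qed
  qed
qed

definition Bb :: "real \<Rightarrow> real \<Rightarrow> nat \<Rightarrow> nat \<Rightarrow> real" where
  "Bb c lam m k = c*(real m - real k) + lam*((real m - real k)*(real m + real k - 1)/2)"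

lemma mono_fill:
  fixes x y t lam :: real
  assumes "x \<le> y" "0 \<le> lam"
  shows "x + min lam (max 0 (t - x)) \<le> y + min lam (max 0 (t - y))"
  using assms by (auto simp: min_def max_def)

lemma core:
  "\<And>c lam a. 0 \<le> c \<Longrightarrow> 0 \<le> lam \<Longrightarrow> (\<forall>j\<in>{1..m}. 0 \<le> a j) \<Longrightarrow>
    (\<forall>i j. 1 \<le> i \<longrightarrow> i \<le> j \<longrightarrow> j \<le> m \<longrightarrow> a i \<le> a j) \<Longrightarrow>
    (\<forall>k\<le>m. (\<Sum>j\<in>{k+1..m}. a j) \<le> Bb c lam m k) \<Longrightarrow>
    \<exists>s p. (\<forall>i\<in>{1..m}. 0 \<le> s i \<and> s i \<le> c) \<and> (\<forall>i\<in>{1..m}. \<forall>j\<in>{1..m}. 0 \<le> p i j) \<and>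
      (\<forall>i\<in>{1..m}. \<forall>j\<in>{1..m}. i \<noteq> j \<longrightarrow> p i j + p j i \<le> lam) \<and>
      (\<forall>i\<in>{1..m}. a i \<le> s i + (\<Sum>j\<in>{1..m}-{i}. p i j))"
proof (induction m)
  case 0
  then show ?case by auto
next
  case (Suc m)
  fix c lam :: real and a :: "nat \<Rightarrow> real"
  assume c0: "0 \<le> c" and l0: "0 \<le> lam" and an: "\<forall>j\<in>{1..Suc m}. 0 \<le> a j"
    and srt: "\<forall>i j. 1 \<le> i \<longrightarrow> i \<le> j \<longrightarrow> j \<le> Suc m \<longrightarrow> a i \<le> a j"
    and cond: "\<forall>k\<le>Suc m. (\<Sum>j\<in>{k+1..Suc m}. a j) \<le> Bb c lam (Suc m) k"
  define w where "w = a (Suc m) - min (a (Suc m)) c"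
  define \<phi> where "\<phi> t = (\<Sum>j\<in>{1..m}. min lam (max 0 (t - a j)))" for t
  define hi where "hi = lam + (\<Sum>j\<in>{1..m}. a j)"
  have aM: "a (Suc m) \<le> c + lam * real m"
    using cond[rule_format, of m] by (simp add: Bb_def)
  have w0: "0 \<le> w" and wle: "w \<le> real m * lam" using aM l0 by (auto simp: w_def min_def mult.commute)
  have phi0: "\<phi> 0 = 0" unfolding \<phi>_def
    by (rule sum.neutral) (use an l0 in auto)
  have phihi: "\<phi> hi = real m * lam"
  proof -
    have "\<phi> hi = (\<Sum>j\<in>{1..m}. lam)" unfolding \<phi>_def
    proof (rule sum.cong)
      fix j assume j: "j \<in> {1..m}"
      have "a j \<le> (\<Sum>j\<in>{1..m}. a j)"
        by (rule member_le_sum) (use j an in auto)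
      then show "min lam (max 0 (hi - a j)) = lam" using l0 unfolding hi_def by auto
    qed simp
    then show ?thesis by simp
  qed
  have "0 \<le> (\<Sum>j\<in>{1..m}. a j)" by (rule sum_nonneg) (use an in auto)
  then have hi0: "0 \<le> hi" unfolding hi_def using l0 by linarith
  have "\<exists>t\<ge>0. t \<le> hi \<and> \<phi> t = w"
    by (rule IVT) (use phi0 phihi w0 wle hi0 in \<open>auto simp: \<phi>_def intro!: continuous_intros\<close>)
  then obtain t where t: "\<phi> t = w" by blast
  define q where "q j = min lam (max 0 (t - a j))" for j
  have sumq: "(\<Sum>j\<in>{1..m}. q j) = w" using t unfolding q_def \<phi>_def by simp
  have qle: "0 \<le> q j" "q j \<le> lam" for j using l0 unfolding q_def by auto
  have srtm: "\<forall>i j. 1 \<le> i \<longrightarrow> i \<le> j \<longrightarrow> j \<le> m \<longrightarrow> a i \<le> a j" using srt by auto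
  have srt': "\<forall>i j. 1 \<le> i \<longrightarrow> i \<le> j \<longrightarrow> j \<le> m \<longrightarrow> a i + q i \<le> a j + q j"
    using srtm l0 unfolding q_def by (auto intro: mono_fill)
  have top: "\<forall>k\<le>m. (\<Sum>j\<in>{k+1..m}. a j) \<le> Nb c lam m k"
  proof (intro allI impI)
    fix k assume km: "k \<le> m"
    have "(\<Sum>j\<in>{k+1..m}. a j) \<le> (\<Sum>j\<in>{k+1..m}. a (j+1))"
      by (rule sum_mono) (use srt in auto)
    also have "\<dots> = (\<Sum>j\<in>{(k+1)+1..m+1}. a j)"
      by (rule sum.shift_bounds_cl_nat_ivl[symmetric])
    also have "\<dots> \<le> Bb c lam (Suc m) (k+1)" using cond km by auto
    also have "\<dots> = Nb c lam m k" unfolding Bb_def Nb_def by (simp add: field_simps)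
    finally show "(\<Sum>j\<in>{k+1..m}. a j) \<le> Nb c lam m k" .
  qed
  have topw: "\<forall>k\<le>m. (\<Sum>j\<in>{k+1..m}. a j) + w \<le> Nb c lam m k + lam * real k"
  proof (intro allI impI)
    fix k assume km: "k \<le> m"
    show "(\<Sum>j\<in>{k+1..m}. a j) + w \<le> Nb c lam m k + lam * real k"
    proof (cases "a (Suc m) \<le> c")
      case True
      then have "w = 0" by (simp add: w_def)
      moreover have "0 \<le> lam * real k" using l0 by simp
      ultimately show ?thesis using top km by force
    next
      case False
      then have "w = a (Suc m) - c" by (simp add: w_def)
      moreover have "(\<Sum>j\<in>{k+1..Suc m}. a j) = (\<Sum>j\<in>{k+1..m}. a j) + a (Suc m)"
        using km by simp
      moreover have "Bb c lam (Suc m) k = Nb c lam m k + lam * real k + c"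
        unfolding Bb_def Nb_def by (simp add: field_simps)
      moreover have "(\<Sum>j\<in>{k+1..Suc m}. a j) \<le> Bb c lam (Suc m) k" using cond km by (meson le_SucI)
      ultimately show ?thesis by linarith
    qed
  qed
  have cond': "\<forall>k\<le>m. (\<Sum>j\<in>{k+1..m}. a j + q j) \<le> Bb (c + lam) lam m k"
  proof (intro allI impI)
    fix k assume km: "k \<le> m"
    have "(\<Sum>j\<in>{k+1..m}. a j + q j) \<le> Nb c lam m k"
      by (rule wf_bound[OF km l0 srtm srt' _ sumq top topw, of t]) (simp add: q_def)
    then show "(\<Sum>j\<in>{k+1..m}. a j + q j) \<le> Bb (c + lam) lam m k"
      unfolding Nb_def Bb_def by simp
  qed
  have "\<exists>s p. (\<forall>i\<in>{1..m}. 0 \<le> s i \<and> s i \<le> c + lam) \<and> (\<forall>i\<in>{1..m}. \<forall>j\<in>{1..m}. 0 \<le> p i j) \<and>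
      (\<forall>i\<in>{1..m}. \<forall>j\<in>{1..m}. i \<noteq> j \<longrightarrow> p i j + p j i \<le> lam) \<and>
      (\<forall>i\<in>{1..m}. a i + q i \<le> s i + (\<Sum>j\<in>{1..m}-{i}. p i j))"
    by (rule Suc.IH) (use c0 l0 an qle srt' cond' in auto)
  then obtain s' p' where s'1: "\<forall>i\<in>{1..m}. 0 \<le> s' i \<and> s' i \<le> c + lam"
    and p'1: "\<forall>i\<in>{1..m}. \<forall>j\<in>{1..m}. 0 \<le> p' i j"
    and p'2: "\<forall>i\<in>{1..m}. \<forall>j\<in>{1..m}. i \<noteq> j \<longrightarrow> p' i j + p' j i \<le> lam"
    and cov: "\<forall>i\<in>{1..m}. a i + q i \<le> s' i + (\<Sum>j\<in>{1..m}-{i}. p' i j)"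
    by blast
  define s where "s i = (if i = Suc m then min (a (Suc m)) c else min (s' i) c)" for i
  define r where "r i = min (s' i - min (s' i) c) (lam - q i)" for i
  define p where "p i j = (if i = Suc m then q j else if j = Suc m then r i else p' i j)" for i j
  show "\<exists>s p. (\<forall>i\<in>{1..Suc m}. 0 \<le> s i \<and> s i \<le> c) \<and> (\<forall>i\<in>{1..Suc m}. \<forall>j\<in>{1..Suc m}. 0 \<le> p i j) \<and>
      (\<forall>i\<in>{1..Suc m}. \<forall>j\<in>{1..Suc m}. i \<noteq> j \<longrightarrow> p i j + p j i \<le> lam) \<and>
      (\<forall>i\<in>{1..Suc m}. a i \<le> s i + (\<Sum>j\<in>{1..Suc m}-{i}. p i j))"
  proof (intro exI[of _ s] exI[of _ p] conjI ballI impI)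
    fix i assume i: "i \<in> {1..Suc m}"
    show "0 \<le> s i" using i an s'1 c0 by (auto simp: s_def le_Suc_eq)
    show "s i \<le> c" by (simp add: s_def)
  next
    fix i j assume i: "i \<in> {1..Suc m}" and j: "j \<in> {1..Suc m}"
    show "0 \<le> p i j" using i j p'1 qle s'1 by (auto simp: p_def r_def le_Suc_eq)
  next
    fix i j assume i: "i \<in> {1..Suc m}" and j: "j \<in> {1..Suc m}" and ij: "i \<noteq> j"
    show "p i j + p j i \<le> lam" using i j ij p'2 by (auto simp: p_def r_def le_Suc_eq)
  next
    fix i assume i: "i \<in> {1..Suc m}"
    show "a i \<le> s i + (\<Sum>j\<in>{1..Suc m}-{i}. p i j)"
    proof (cases "i = Suc m")
      case True
      have "{1..Suc m} - {i} = {1..m}" using True by auto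
      then have "(\<Sum>j\<in>{1..Suc m}-{i}. p i j) = w" using True sumq by (simp add: p_def)
      then show ?thesis using True by (simp add: s_def w_def)
    next
      case False
      then have im: "i \<in> {1..m}" using i by auto
      have e: "{1..Suc m} - {i} = insert (Suc m) ({1..m} - {i})" using False i by auto
      have "(\<Sum>j\<in>{1..Suc m}-{i}. p i j) = r i + (\<Sum>j\<in>{1..m}-{i}. p' i j)"
      proof -
        have "(\<Sum>j\<in>{1..Suc m}-{i}. p i j) = p i (Suc m) + (\<Sum>j\<in>{1..m}-{i}. p i j)"
          unfolding e by (subst sum.insert) auto
        moreover have "(\<Sum>j\<in>{1..m}-{i}. p i j) = (\<Sum>j\<in>{1..m}-{i}. p' i j)"
          by (rule sum.cong) (use False in \<open>auto simp: p_def\<close>)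
        ultimately show ?thesis using False by (simp add: p_def)
      qed
      moreover have "a i + q i \<le> s' i + (\<Sum>j\<in>{1..m}-{i}. p' i j)" using cov im by auto
      moreover have "s' i \<le> c + lam" using s'1 im by auto
      moreover have "s i = min (s' i) c" using False by (simp add: s_def)
      ultimately show ?thesis using qle[of i] unfolding r_def by (auto simp: min_def)
    qed
  qed
qed

lemma sgn_bound:
  fixes x th y :: real
  assumes "0 \<le> th" "th \<le> 1" "0 \<le> y"
  shows "\<bar>- (sgn x * th * y)\<bar> \<le> y"
proof -
  have "\<bar>sgn x\<bar> \<le> 1" by (cases x rule: linorder_cases) auto
  then have "\<bar>sgn x\<bar> * th \<le> 1" using assms by (metis abs_ge_zero mult_le_one)
  then have "\<bar>sgn x\<bar> * th * y \<le> y" using assms by (metis mult_left_le_one_le mult.commute abs_ge_zero mult_nonneg_nonneg)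
  then show ?thesis using assms by (simp add: abs_mult)
qed

theorem theorem2:
  fixes m :: nat and lambda1 lambda2 :: real and f :: "nat \<Rightarrow> real"
  assumes "m \<ge> 1" and "lambda1 \<ge> 0" and "lambda2 \<ge> 0"
    and "\<And>i j. 1 \<le> i \<Longrightarrow> i \<le> j \<Longrightarrow> j \<le> m \<Longrightarrow> \<bar>f i\<bar> \<le> \<bar>f j\<bar>"
  shows "(\<exists>xi0 :: nat \<Rightarrow> real. \<exists>xi :: nat \<Rightarrow> nat \<Rightarrow> real.
            (\<forall>i\<in>{1..m}. \<bar>xi0 i\<bar> \<le> lambda1) \<and>
            (\<forall>i\<in>{1..m}. \<forall>j\<in>{1..m}. i \<noteq> j \<longrightarrow>
                 \<bar>xi i j\<bar> \<le> lambda2 \<and> \<bar>xi i j\<bar> + \<bar>xi j i\<bar> \<le> lambda2) \<and>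
            (\<forall>i\<in>{1..m}. f i + xi0 i + (\<Sum>j\<in>{1..m} - {i}. xi i j) = 0))
         \<longleftrightarrow>
         (\<forall>k\<in>{0..m-1}. (\<Sum>j\<in>{k+1..m}. \<bar>f j\<bar>)
            \<le> lambda1 * real (m - k) + lambda2 * (real (m - k) * (real m + real k - 1) / 2))"
  (is "?L \<longleftrightarrow> ?R")
proof
  assume ?L
  then obtain xi0 xi where h0: "\<forall>i\<in>{1..m}. \<bar>xi0 i\<bar> \<le> lambda1"
    and hx: "\<forall>i\<in>{1..m}. \<forall>j\<in>{1..m}. i \<noteq> j \<longrightarrow>
                 \<bar>xi i j\<bar> \<le> lambda2 \<and> \<bar>xi i j\<bar> + \<bar>xi j i\<bar> \<le> lambda2"
    and he: "\<forall>i\<in>{1..m}. f i + xi0 i + (\<Sum>j\<in>{1..m} - {i}. xi i j) = 0" by blast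
  show ?R
  proof
    fix k assume k: "k \<in> {0..m-1}"
    define T where "T = {k+1..m}"
    have fi: "\<bar>f i\<bar> \<le> lambda1 + (\<Sum>j\<in>{1..k}. \<bar>xi i j\<bar>) + (\<Sum>j\<in>T-{i}. \<bar>xi i j\<bar>)"
      if i: "i \<in> T" for i
    proof -
      have im: "i \<in> {1..m}" using i k unfolding T_def by auto
      have "f i = - (xi0 i + (\<Sum>j\<in>{1..m} - {i}. xi i j))" proof -
        have "f i + xi0 i + (\<Sum>j\<in>{1..m} - {i}. xi i j) = 0" using he im by blast
        then show ?thesis by linarith
      qed
      then have "\<bar>f i\<bar> \<le> \<bar>xi0 i\<bar> + \<bar>\<Sum>j\<in>{1..m} - {i}. xi i j\<bar>" by (simp add: abs_triangle_ineq)
      also have "\<dots> \<le> lambda1 + (\<Sum>j\<in>{1..m} - {i}. \<bar>xi i j\<bar>)" using h0 im sum_abs by (intro add_mono) auto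
      also have "(\<Sum>j\<in>{1..m} - {i}. \<bar>xi i j\<bar>) = (\<Sum>j\<in>{1..k}. \<bar>xi i j\<bar>) + (\<Sum>j\<in>T-{i}. \<bar>xi i j\<bar>)"
      proof -
        have e: "{1..m} - {i} = {1..k} \<union> (T - {i})" using i k unfolding T_def by auto
        have "(\<Sum>j\<in>{1..k} \<union> (T - {i}). \<bar>xi i j\<bar>) = (\<Sum>j\<in>{1..k}. \<bar>xi i j\<bar>) + (\<Sum>j\<in>T-{i}. \<bar>xi i j\<bar>)"
          by (rule sum.union_disjoint) (auto simp: T_def)
        then show ?thesis using e by simp
      qed
      finally show ?thesis by linarith
    qed
    have "(\<Sum>i\<in>T. \<bar>f i\<bar>) \<le> (\<Sum>i\<in>T. lambda1 + (\<Sum>j\<in>{1..k}. \<bar>xi i j\<bar>) + (\<Sum>j\<in>T-{i}. \<bar>xi i j\<bar>))"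
      by (rule sum_mono) (use fi in auto)
    also have "\<dots> = real (card T) * lambda1 + (\<Sum>i\<in>T. \<Sum>j\<in>{1..k}. \<bar>xi i j\<bar>) + (\<Sum>i\<in>T. \<Sum>j\<in>T-{i}. \<bar>xi i j\<bar>)"
      by (simp add: sum.distrib)
    also have "(\<Sum>i\<in>T. \<Sum>j\<in>{1..k}. \<bar>xi i j\<bar>) \<le> (\<Sum>i\<in>T. \<Sum>j\<in>{1..k}. lambda2)"
      apply (intro sum_mono) using hx k unfolding T_def by auto
    also have "(\<Sum>i\<in>T. \<Sum>j\<in>T-{i}. \<bar>xi i j\<bar>) \<le> lambda2 * (real (card T) * (real (card T) - 1) / 2)"
      by (rule pair_sum) (use hx k in \<open>auto simp: T_def\<close>)
    finally have "(\<Sum>i\<in>T. \<bar>f i\<bar>) \<le> real (card T) * lambda1 + real (card T) * (real k * lambda2)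
        + lambda2 * (real (card T) * (real (card T) - 1) / 2)" by simp
    moreover have "card T = m - k" unfolding T_def by simp
    moreover have "real (m - k) = real m - real k" using k by (auto simp: of_nat_diff)
    ultimately show "(\<Sum>j\<in>{k+1..m}. \<bar>f j\<bar>)
            \<le> lambda1 * real (m - k) + lambda2 * (real (m - k) * (real m + real k - 1) / 2)"
      unfolding T_def by (simp add: algebra_simps divide_simps)
  qed
next
  assume R: ?R
  have cnd: "\<forall>k\<le>m. (\<Sum>j\<in>{k+1..m}. \<bar>f j\<bar>) \<le> Bb lambda1 lambda2 m k"
  proof (intro allI impI)
    fix k assume km: "k \<le> m"
    show "(\<Sum>j\<in>{k+1..m}. \<bar>f j\<bar>) \<le> Bb lambda1 lambda2 m k"
    proof (cases "k = m")
      case True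
      then show ?thesis by (simp add: Bb_def)
    next
      case False
      then have "k \<in> {0..m-1}" using km by auto
      then show ?thesis using R km by (auto simp: Bb_def of_nat_diff)
    qed
  qed
  obtain s p where s1: "\<forall>i\<in>{1..m}. 0 \<le> s i \<and> s i \<le> lambda1"
    and p1: "\<forall>i\<in>{1..m}. \<forall>j\<in>{1..m}. 0 \<le> p i j"
    and p2: "\<forall>i\<in>{1..m}. \<forall>j\<in>{1..m}. i \<noteq> j \<longrightarrow> p i j + p j i \<le> lambda2"
    and cov: "\<forall>i\<in>{1..m}. \<bar>f i\<bar> \<le> s i + (\<Sum>j\<in>{1..m}-{i}. p i j)"
    using core[of lambda1 lambda2 m "\<lambda>j. \<bar>f j\<bar>"] assms cnd by auto
  define D where "D i = s i + (\<Sum>j\<in>{1..m}-{i}. p i j)" for i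
  define th where "th i = \<bar>f i\<bar> / D i" for i
  have th: "0 \<le> th i \<and> th i \<le> 1 \<and> th i * D i = \<bar>f i\<bar>" if i: "i \<in> {1..m}" for i
  proof -
    have "\<bar>f i\<bar> \<le> D i" using cov i unfolding D_def by auto
    then show ?thesis unfolding th_def by (cases "D i = 0") auto
  qed
  show ?L
  proof (intro exI[of _ "\<lambda>i. - (sgn (f i) * th i * s i)"] exI[of _ "\<lambda>i j. - (sgn (f i) * th i * p i j)"] conjI ballI impI)
    fix i assume i: "i \<in> {1..m}"
    show "\<bar>- (sgn (f i) * th i * s i)\<bar> \<le> lambda1"
      using sgn_bound[of "th i" "s i" "f i"] th[OF i] s1 i by force
  next
    fix i j assume i: "i \<in> {1..m}" and j: "j \<in> {1..m}" and ij: "i \<noteq> j"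
    have a1: "\<bar>- (sgn (f i) * th i * p i j)\<bar> \<le> p i j"
      using sgn_bound[of "th i" "p i j" "f i"] th[OF i] p1 i j by force
    have a2: "\<bar>- (sgn (f j) * th j * p j i)\<bar> \<le> p j i"
      using sgn_bound[of "th j" "p j i" "f j"] th[OF j] p1 i j by force
    have "p i j + p j i \<le> lambda2" "0 \<le> p j i" using p1 p2 i j ij by auto
    then show "\<bar>- (sgn (f i) * th i * p i j)\<bar> \<le> lambda2"
      "\<bar>- (sgn (f i) * th i * p i j)\<bar> + \<bar>- (sgn (f j) * th j * p j i)\<bar> \<le> lambda2"
      using a1 a2 by linarith+
  next
    fix i assume i: "i \<in> {1..m}"
    have "(\<Sum>j\<in>{1..m} - {i}. - (sgn (f i) * th i * p i j)) = - (sgn (f i) * th i * (\<Sum>j\<in>{1..m} - {i}. p i j))"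
      by (simp add: sum_negf sum_distrib_left)
    then have "f i + - (sgn (f i) * th i * s i) + (\<Sum>j\<in>{1..m} - {i}. - (sgn (f i) * th i * p i j))
        = f i - sgn (f i) * (th i * D i)" unfolding D_def by (simp add: algebra_simps)
    also have "\<dots> = 0" using th[OF i] by (simp add: sgn_mult_abs)
    finally show "f i + - (sgn (f i) * th i * s i) + (\<Sum>j\<in>{1..m} - {i}. - (sgn (f i) * th i * p i j)) = 0" .
  qed
qed

end
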